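(* Let $P=(T;U,V)$ be a 3M-DAP with $2 \le v < u$, and let $\lambda = x_u - x_v$, $\gamma = x_t/t$. Define \[ h(y) = \frac{1}{2}\,\frac{(u-v)y - \lambda}{\gamma(u-v) - \lambda}. \] Then $h$ is an increasing linear function, and applying $h$ entrywise to any feasible solution of $P$ yields a feasible solution of the 3M-DAP $\hat P = (\hat T; \hat U, \hat V)$ with the same matrix dimensions as $P$ and with required row sums $\hat x_t = t/2$ and $\hat x_u = \hat x_v$ (namely $\hat x_u = \hat x_v = \tfrac12 \frac{u x_v - v x_u}{\gamma(u-v)-\lambda}$); in particular $\hat P$ is in standard form and $P$ is equivalent to $\hat P$ with equivalence function $h$.
   Context: A three-matrix division and assignment problem (3M-DAP) $P=(T;U,V)$ is specified by integers $t,u,v$ (numbers of columns), integers $s_t, s_u, s_v$ (numbers of rows) and rationals $x_t, x_u, x_v$ (required row sums), subject to: $t \ge 2$, $u \ge 2$, $v \ge 1$; if $v = 1$ then $v s_v \le (t-2)s_t$; $s_t > 0$, $s_u > 0$, $s_v \ge 0$; $s_u u + s_v v = s_t t$; $s_u x_u + s_v x_v = s_t x_t$; and $x_u/u < x_v/v$. A feasible solution assigns real values to the entries of an $s_t\times t$ matrix $T$, an $s_u \times u$ matrix $U$ and an $s_v \times v$ matrix $V$ so that every row of $T$, $U$, $V$ sums to $x_t$, $x_u$, $x_v$ respectively, and the multiset of entries of $T$ equals the multiset union of the entries of $U$ and $V$. A 3M-DAP is in standard form if $x_u - x_v = 0$ and $x_t/t = 1/2$. Two 3M-DAPs are equivalent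 if their matrices have the same dimensions and there is an increasing linear function mapping the entries of solutions of the first to the entries of solutions of the second. *)

theory Defs
  imports Main "HOL-Library.Multiset" Complex_Main
begin

text \<open>A 3M-DAP P = (T;U,V) is given by column numbers t u v, row numbers st su sv,
  and rational required row sums xt xu xv (represented as reals lying in the rationals).\<close>

definition is_3mdap ::
  "nat \<Rightarrow> nat \<Rightarrow> nat \<Rightarrow> nat \<Rightarrow> nat \<Rightarrow> nat \<Rightarrow> real \<Rightarrow> real \<Rightarrow> real \<Rightarrow> bool" where
  "is_3mdap t u v st su sv xt xu xv \<longleftrightarrow>
     xt \<in> \<rat> \<and> xu \<in> \<rat> \<and> xv \<in> \<rat> \<and>
     t \<ge> 2 \<and> u \<ge> 2 \<and> v \<ge> 1 \<and>
     (v = 1 \<longrightarrow> int v * int sv \<le> (int t - 2) * int st) \<and>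
     st > 0 \<and> su > 0 \<and>
     su * u + sv * v = st * t \<and>
     real su * xu + real sv * xv = real st * xt \<and>
     xu / real u < xv / real v"

definition entries :: "nat \<Rightarrow> nat \<Rightarrow> (nat \<Rightarrow> nat \<Rightarrow> real) \<Rightarrow> real multiset" where
  "entries r c M = image_mset (\<lambda>(i,j). M i j) (mset_set ({..<r} \<times> {..<c}))"

definition rows_sum_to :: "nat \<Rightarrow> nat \<Rightarrow> (nat \<Rightarrow> nat \<Rightarrow> real) \<Rightarrow> real \<Rightarrow> bool" where
  "rows_sum_to r c M x \<longleftrightarrow> (\<forall>i<r. (\<Sum>j<c. M i j) = x)"

text \<open>Feasible solution (T, U, V) of the 3M-DAP; only entries within the dimensions matter.\<close>
definition feasible ::
  "nat \<Rightarrow> nat \<Rightarrow> nat \<Rightarrow> nat \<Rightarrow> nat \<Rightarrow> nat \<Rightarrow> real \<Rightarrow> real \<Rightarrow> real \<Rightarrow>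
   (nat \<Rightarrow> nat \<Rightarrow> real) \<Rightarrow> (nat \<Rightarrow> nat \<Rightarrow> real) \<Rightarrow> (nat \<Rightarrow> nat \<Rightarrow> real) \<Rightarrow> bool" where
  "feasible t u v st su sv xt xu xv T U V \<longleftrightarrow>
     rows_sum_to st t T xt \<and> rows_sum_to su u U xu \<and> rows_sum_to sv v V xv \<and>
     entries st t T = entries su u U + entries sv v V"

definition standard_form :: "nat \<Rightarrow> real \<Rightarrow> real \<Rightarrow> real \<Rightarrow> bool" where
  "standard_form t xt xu xv \<longleftrightarrow> xu - xv = 0 \<and> xt / real t = 1/2"

definition equivalent_via ::
  "(real \<Rightarrow> real) \<Rightarrow> nat \<Rightarrow> nat \<Rightarrow> nat \<Rightarrow> nat \<Rightarrow> nat \<Rightarrow> nat \<Rightarrow>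
   real \<Rightarrow> real \<Rightarrow> real \<Rightarrow> real \<Rightarrow> real \<Rightarrow> real \<Rightarrow> bool" where
  "equivalent_via h t u v st su sv xt xu xv xt' xu' xv' \<longleftrightarrow>
     (\<exists>a b. a > 0 \<and> (\<forall>y. h y = a * y + b)) \<and>
     (\<forall>T U V. feasible t u v st su sv xt xu xv T U V \<longrightarrow>
        feasible t u v st su sv xt' xu' xv'
          (\<lambda>i j. h (T i j)) (\<lambda>i j. h (U i j)) (\<lambda>i j. h (V i j)))"

end

theory Submission
  imports Defs
begin

lemma entries_map:
  "entries r c (\<lambda>i j. f (M i j)) = image_mset f (entries r c M)"
  unfolding entries_def by (simp add: multiset.map_comp comp_def case_prod_beta')

lemma rows_map:
  assumes "rows_sum_to r c M x" "\<forall>y. f y = a * y + b"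
  shows "rows_sum_to r c (\<lambda>i j. f (M i j)) (a * x + real c * b)"
  using assms unfolding rows_sum_to_def
  by (simp add: sum.distrib sum_distrib_left[symmetric])

theorem theorem2:
  fixes t u v st su sv :: nat and xt xu xv :: real and h :: "real \<Rightarrow> real"
  assumes P: "is_3mdap t u v st su sv xt xu xv"
    and v2: "2 \<le> v" and vu: "v < u"
    and h_def: "h = (\<lambda>y. (1/2) * (((real u - real v) * y - (xu - xv)) /
                               ((xt / real t) * (real u - real v) - (xu - xv))))"
  shows "(\<exists>a b. a > 0 \<and> (\<forall>y. h y = a * y + b))
    \<and> is_3mdap t u v st su sv (real t / 2)
        ((1/2) * (real u * xv - real v * xu) / ((xt / real t) * (real u - real v) - (xu - xv)))
        ((1/2) * (real u * xv - real v * xu) / ((xt / real t) * (real u - real v) - (xu - xv)))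
    \<and> standard_form t (real t / 2)
        ((1/2) * (real u * xv - real v * xu) / ((xt / real t) * (real u - real v) - (xu - xv)))
        ((1/2) * (real u * xv - real v * xu) / ((xt / real t) * (real u - real v) - (xu - xv)))
    \<and> equivalent_via h t u v st su sv xt xu xv (real t / 2)
        ((1/2) * (real u * xv - real v * xu) / ((xt / real t) * (real u - real v) - (xu - xv)))
        ((1/2) * (real u * xv - real v * xu) / ((xt / real t) * (real u - real v) - (xu - xv)))"
proof -
  define D where "D = (xt / real t) * (real u - real v) - (xu - xv)"
  define X where "X = (1/2) * (real u * xv - real v * xu) / D"
  note P' = P[unfolded is_3mdap_def]
  have t0: "real t > 0" using P' by auto
  have u0: "real u > 0" and v0: "real v > 0" using P' v2 by auto
  have st0: "real st > 0" using P' by auto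
  have dims: "real su * real u + real sv * real v = real st * real t"
    using P' by (metis of_nat_add of_nat_mult)
  have sums: "real su * xu + real sv * xv = real st * xt" using P' by auto
  have ab: "xu / real u < xv / real v" using P' by auto
  have pos: "real u * xv - real v * xu > 0"
  proof -
    have "xu * real v < xv * real u" using ab u0 v0 by (simp add: field_simps)
    thus ?thesis by (simp add: algebra_simps)
  qed
  define g where "g = xt / real t"
  have xtg: "xt = g * real t" using t0 by (simp add: g_def)
  have key: "real st * real t * D = (real su + real sv) * (real u * xv - real v * xu)"
  proof -
    have "real st * real t * D = (real u - real v) * (real st * xt) - (real st * real t) * (xu - xv)"
      unfolding D_def using t0 by (simp add: field_simps)
    also have "\<dots> = (real u - real v) * (real su * xu + real sv * xv)
               - (real su * real u + real sv * real v) * (xu - xv)" using dims sums by simp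
    also have "\<dots> = (real su + real sv) * (real u * xv - real v * xu)" by (simp add: algebra_simps)
    finally show ?thesis .
  qed
  have Dpos: "D > 0"
  proof -
    have "real su + real sv > 0" using P' by auto
    hence "real st * real t * D > 0" using key pos by simp
    thus ?thesis using st0 t0 by (smt (verit) mult_pos_pos zero_less_mult_iff)
  qed
  have Xpos: "X > 0" unfolding X_def using pos Dpos by simp
  have Xrat: "X \<in> \<rat>" unfolding X_def D_def using P'
    by (intro Rats_divide Rats_mult Rats_diff Rats_of_nat) auto
  have lin: "\<forall>y. h y = ((real u - real v) / (2*D)) * y + (- (xu - xv) / (2*D))"
    using Dpos unfolding h_def D_def[symmetric] by (simp add: field_simps)
  have apos: "(real u - real v) / (2*D) > 0" using vu Dpos by simp
  have hT: "((real u - real v) / (2*D)) * xt + real t * (- (xu - xv) / (2*D)) = real t / 2"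
  proof -
    have e: "(real u - real v) * xt - real t * (xu - xv) = real t * D"
      unfolding D_def using t0 by (simp add: field_simps)
    have "((real u - real v) / (2*D)) * xt + real t * (- (xu - xv) / (2*D))
       = ((real u - real v) * xt - real t * (xu - xv)) / (2*D)"
      using Dpos by (simp add: field_simps)
    also have "\<dots> = real t / 2" unfolding e using Dpos by simp
    finally show ?thesis .
  qed
  have hU: "((real u - real v) / (2*D)) * xu + real u * (- (xu - xv) / (2*D)) = X"
    using Dpos unfolding X_def by (simp add: field_simps)
  have hV: "((real u - real v) / (2*D)) * xv + real v * (- (xu - xv) / (2*D)) = X"
    using Dpos unfolding X_def by (simp add: field_simps)
  have m1: "is_3mdap t u v st su sv (real t / 2) X X"
  proof -
    have "real su * X + real sv * X = real st * (real t / 2)"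
    proof -
      have "(real su + real sv) * X = real st * real t * D / (2 * D)"
        unfolding X_def using key Dpos by (simp add: field_simps)
      thus ?thesis using Dpos by (simp add: algebra_simps)
    qed
    moreover have "X / real u < X / real v"
      using Xpos vu v0 by (simp add: divide_strict_left_mono)
    ultimately show ?thesis using P' Xrat v2 unfolding is_3mdap_def
      by (auto intro: Rats_divide)
  qed
  have m2: "standard_form t (real t / 2) X X"
    unfolding standard_form_def using t0 by simp
  have m3: "equivalent_via h t u v st su sv xt xu xv (real t / 2) X X"
    unfolding equivalent_via_def
  proof (intro conjI allI impI)
    show "\<exists>a b. a > 0 \<and> (\<forall>y. h y = a * y + b)" using lin apos by blast
  next
    fix T U V assume F: "feasible t u v st su sv xt xu xv T U V"
    show "feasible t u v st su sv (real t / 2) X X (\<lambda>i j. h (T i j)) (\<lambda>i j. h (U i j)) (\<lambda>i j. h (V i j))"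
    proof -
      have F': "rows_sum_to st t T xt" "rows_sum_to su u U xu" "rows_sum_to sv v V xv"
        "entries st t T = entries su u U + entries sv v V" using F unfolding feasible_def by auto
      have r1: "rows_sum_to st t (\<lambda>i j. h (T i j)) (real t / 2)"
        using rows_map[OF F'(1) lin] unfolding hT .
      have r2: "rows_sum_to su u (\<lambda>i j. h (U i j)) X"
        using rows_map[OF F'(2) lin] unfolding hU .
      have r3: "rows_sum_to sv v (\<lambda>i j. h (V i j)) X"
        using rows_map[OF F'(3) lin] unfolding hV .
      show ?thesis unfolding feasible_def entries_map using r1 r2 r3 F'(4) by simp
    qed
  qed
  show ?thesis using lin apos m1 m2 m3 unfolding X_def D_def by blast
qed

end
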